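(* Let $\Sigma$ be a signature and $T$ a monad on sets carrying a continuous $\Sigma$-algebra structure, and let $\Downarrow_n$ be the evaluation judgment defined below. For every closed term $M$, all $n,N\in\mathbb{N}$ and all $X,Y\in T\mathcal{V}_0$: if $M\Downarrow_n X$ and $M\Downarrow_{n+N}Y$, then $X\sqsubseteq Y$.
   Context: A signature $\Sigma$ is a set of operation symbols, each $\sigma$ with a finite arity $\alpha(\sigma)\in\mathbb{N}$. An $\omega$-complete pointed partial order ($\omega$CPPO) is a poset with a least element $\bot$ in which every $\omega$-chain $x_0\sqsubseteq x_1\sqsubseteq\cdots$ has a least upper bound; a map between $\omega$CPPOs is continuous if it is monotone and preserves lubs of $\omega$-chains. $T$ has unit $\eta$ and bind $u\texttt{>>=}f\in TY$ for $u\in TX$, $f:X\to TY$. $T$ carries a continuous $\Sigma$-algebra structure if each $TX$ is equipped with an $\omega$CPPO structure $(\sqsubseteq,\bot)$ such that bind is continuous in both arguments (maps $X\to TY$ ordered pointwise), and each $\sigma\in\Sigma$ of arity $k$ is interpreted, for every set $X$, by a continuous map $\sigma^T:(TX)^k\to TX$. Terms and values: $M,N::=\mathsf{return}\,V\mid VW\mid (M\ \mathsf{to}\ x.N)\mid\sigma(M_1,\dots,M_{\alpha(\sigma)})$, $V,W::=x\mid\lambda x.M$, modulo $\alpha$-equivalence, with capture-avoiding substitution $M[V/x]$; $\mathcal{T}_0,\mathcal{V}_0$ are the closed terms and closed values. The judgment $M\Downarrow_n X$ ($M\in\mathcal{T}_0$, $X\in T\mathcal{V}_0$) is defined inductively by: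 (bot) $M\Downarrow_0\bot$; (ret) $\mathsf{return}\,V\Downarrow_{n+1}\eta(V)$; (seq) if $M\Downarrow_n X$ and for every closed value $V$, $N[V/x]\Downarrow_n Y_V$, then $(M\ \mathsf{to}\ x.N)\Downarrow_{n+1}X\texttt{>>=}(V\mapsto Y_V)$; (app) if $M[V/x]\Downarrow_n X$ then $(\lambda x.M)V\Downarrow_{n+1}X$; (op) if $M_i\Downarrow_n X_i$ for $i=1,\dots,k$ then $\sigma(M_1,\dots,M_k)\Downarrow_{n+1}\sigma^T(X_1,\dots,X_k)$. *)

theory Defs
  imports Main
begin

class signature =
  fixes arity :: "'a \<Rightarrow> nat"

section \<open>Syntax (de Bruijn indices, so terms are identified up to alpha-equivalence)\<close>

datatype 'a tm =
    Ret "'a vl"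
  | App "'a vl" "'a vl"
  | To "'a tm" "'a tm"          \<comment> \<open>To M N  =  (M to x. N), x is index 0 in N\<close>
  | Op 'a "'a tm list"
and 'a vl =
    Var nat
  | Lam "'a tm"                  \<comment> \<open>Lam M = \<lambda>x. M, x is index 0 in M\<close>

fun ctm :: "nat \<Rightarrow> ('a::signature) tm \<Rightarrow> bool"
and cvl :: "nat \<Rightarrow> ('a::signature) vl \<Rightarrow> bool" where
  "ctm k (Ret v) = cvl k v"
| "ctm k (App v w) = (cvl k v \<and> cvl k w)"
| "ctm k (To M N) = (ctm k M \<and> ctm (Suc k) N)"
| "ctm k (Op s Ms) = (length Ms = arity s \<and> (\<forall>M\<in>set Ms. ctm k M))"
| "cvl k (Var i) = (i < k)"
| "cvl k (Lam M) = ctm (Suc k) M"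

text \<open>Substitution of a closed value V for index k (only ever used with closed V,
  so no shifting of V is needed; free indices above k are decremented).\<close>
fun subst_tm :: "nat \<Rightarrow> 'a vl \<Rightarrow> 'a tm \<Rightarrow> 'a tm"
and subst_vl :: "nat \<Rightarrow> 'a vl \<Rightarrow> 'a vl \<Rightarrow> 'a vl" where
  "subst_tm k V (Ret v) = Ret (subst_vl k V v)"
| "subst_tm k V (App v w) = App (subst_vl k V v) (subst_vl k V w)"
| "subst_tm k V (To M N) = To (subst_tm k V M) (subst_tm (Suc k) V N)"
| "subst_tm k V (Op s Ms) = Op s (map (subst_tm k V) Ms)"
| "subst_vl k V (Var i) = (if i = k then V else if i < k then Var i else Var (i - 1))"
| "subst_vl k V (Lam M) = Lam (subst_tm (Suc k) V M)"

typedef (overloaded) ('a::signature) cval = "{v :: 'a vl. cvl 0 v}"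
  by (rule exI[of _ "Lam (Ret (Var 0))"]) simp

definition omega_chain :: "('t \<Rightarrow> 't \<Rightarrow> bool) \<Rightarrow> (nat \<Rightarrow> 't) \<Rightarrow> bool" where
  "omega_chain le c \<longleftrightarrow> (\<forall>i. le (c i) (c (Suc i)))"

definition is_lub :: "('t \<Rightarrow> 't \<Rightarrow> bool) \<Rightarrow> 't set \<Rightarrow> 't \<Rightarrow> bool" where
  "is_lub le A l \<longleftrightarrow> (\<forall>x\<in>A. le x l) \<and> (\<forall>u. (\<forall>x\<in>A. le x u) \<longrightarrow> le l u)"

definition omega_cppo :: "('t \<Rightarrow> 't \<Rightarrow> bool) \<Rightarrow> 't \<Rightarrow> bool" where
  "omega_cppo le bt \<longleftrightarrow>
     (\<forall>x. le x x) \<and> (\<forall>x y z. le x y \<longrightarrow> le y z \<longrightarrow> le x z) \<and>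
     (\<forall>x y. le x y \<longrightarrow> le y x \<longrightarrow> x = y) \<and>
     (\<forall>x. le bt x) \<and>
     (\<forall>c. omega_chain le c \<longrightarrow> (\<exists>l. is_lub le (range c) l))"

definition ocont_on :: "'a set \<Rightarrow> ('a \<Rightarrow> 'a \<Rightarrow> bool) \<Rightarrow> ('b \<Rightarrow> 'b \<Rightarrow> bool) \<Rightarrow> ('a \<Rightarrow> 'b) \<Rightarrow> bool" where
  "ocont_on D le1 le2 f \<longleftrightarrow>
     (\<forall>x\<in>D. \<forall>y\<in>D. le1 x y \<longrightarrow> le2 (f x) (f y)) \<and>
     (\<forall>c l. range c \<subseteq> D \<longrightarrow> l \<in> D \<longrightarrow> omega_chain le1 c \<longrightarrow> is_lub le1 (range c) l
            \<longrightarrow> is_lub le2 (range (f \<circ> c)) (f l))"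

definition fun_le :: "('t \<Rightarrow> 't \<Rightarrow> bool) \<Rightarrow> ('v \<Rightarrow> 't) \<Rightarrow> ('v \<Rightarrow> 't) \<Rightarrow> bool" where
  "fun_le le f g \<longleftrightarrow> (\<forall>v. le (f v) (g v))"

text \<open>le, bt: the omega-CPPO structure on TV0; eta, bind: unit and bind of T at V0;
  sop s: the interpretation of s on (TV0)^(arity s), as a function on lists of that length.\<close>
definition cont_sigma_monad ::
  "('t \<Rightarrow> 't \<Rightarrow> bool) \<Rightarrow> 't \<Rightarrow> (('a::signature) cval \<Rightarrow> 't) \<Rightarrow> ('t \<Rightarrow> ('a cval \<Rightarrow> 't) \<Rightarrow> 't)
   \<Rightarrow> ('a \<Rightarrow> 't list \<Rightarrow> 't) \<Rightarrow> bool" where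
  "cont_sigma_monad le bt eta bind sop \<longleftrightarrow>
     omega_cppo le bt \<and>
     (\<forall>v f. bind (eta v) f = f v) \<and>
     (\<forall>u. bind u eta = u) \<and>
     (\<forall>u f g. bind (bind u f) g = bind u (\<lambda>v. bind (f v) g)) \<and>
     (\<forall>f. ocont_on UNIV le le (\<lambda>u. bind u f)) \<and>
     (\<forall>u. ocont_on UNIV (fun_le le) le (\<lambda>f. bind u f)) \<and>
     (\<forall>s. ocont_on {xs. length xs = arity s} (list_all2 le) le (sop s))"

inductive eval :: "'t \<Rightarrow> (('a::signature) cval \<Rightarrow> 't) \<Rightarrow> ('t \<Rightarrow> ('a cval \<Rightarrow> 't) \<Rightarrow> 't)
   \<Rightarrow> ('a \<Rightarrow> 't list \<Rightarrow> 't) \<Rightarrow> 'a tm \<Rightarrow> nat \<Rightarrow> 't \<Rightarrow> bool"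
  for bt eta bind sop where
  ev_bot: "ctm 0 M \<Longrightarrow> eval bt eta bind sop M 0 bt"
| ev_ret: "eval bt eta bind sop (Ret (Rep_cval V)) (Suc n) (eta V)"
| ev_seq: "\<lbrakk> ctm 1 N; eval bt eta bind sop M n X;
            \<forall>V. eval bt eta bind sop (subst_tm 0 (Rep_cval V) N) n (Y V) \<rbrakk>
           \<Longrightarrow> eval bt eta bind sop (To M N) (Suc n) (bind X Y)"
| ev_app: "\<lbrakk> ctm 1 M; eval bt eta bind sop (subst_tm 0 (Rep_cval V) M) n X \<rbrakk>
           \<Longrightarrow> eval bt eta bind sop (App (Lam M) (Rep_cval V)) (Suc n) X"
| ev_op: "\<lbrakk> length Ms = arity s; list_all2 (\<lambda>M X. eval bt eta bind sop M n X) Ms Xs \<rbrakk>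
           \<Longrightarrow> eval bt eta bind sop (Op s Ms) (Suc n) (sop s Xs)"

end

theory Submission
  imports Defs
begin

lemma eval_mono_aux:
  assumes C: "cont_sigma_monad le bt eta bind sop"
  shows "eval bt eta bind sop M n X \<Longrightarrow> eval bt eta bind sop M m Y \<Longrightarrow> n \<le> m \<Longrightarrow> le X Y"
proof (induction M n X arbitrary: m Y rule: eval.induct)
  have cp: "omega_cppo le bt" using C by (simp add: cont_sigma_monad_def)
  hence refl: "\<And>x. le x x" and trans: "\<And>x y z. le x y \<Longrightarrow> le y z \<Longrightarrow> le x z"
    and bot: "\<And>x. le bt x" by (auto simp: omega_cppo_def)
  {
  case (ev_bot M)
  then show ?case using bot by blast
  next
  case (ev_ret V n)
  then obtain m' where m: "m = Suc m'" by (cases m) auto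
  from ev_ret.prems(1) show ?case unfolding m
    by (cases rule: eval.cases) (auto simp: Rep_cval_inject refl)
  next
  case (ev_seq N M n X Y0)
  then obtain m' where m: "m = Suc m'" by (cases m) auto
  from ev_seq.prems(1)[unfolded m] show ?case
  proof (cases rule: eval.cases)
    case ev2: (ev_seq X' Y')
    have h1: "le X X'" using ev2 ev_seq.IH(1)[of m' X'] m ev_seq.prems by auto
    have h2: "fun_le le Y0 Y'" unfolding fun_le_def
      using ev2 ev_seq.IH(2) m ev_seq.prems by auto
    have "le (bind X Y0) (bind X' Y0)" using C h1
      by (auto simp: cont_sigma_monad_def ocont_on_def)
    moreover have "le (bind X' Y0) (bind X' Y')" using C h2
      by (auto simp: cont_sigma_monad_def ocont_on_def)
    ultimately show ?thesis using ev2 trans by blast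
  qed
  next
  case (ev_app M V n X)
  then obtain m' where m: "m = Suc m'" by (cases m) auto
  from ev_app.prems(1)[unfolded m] show ?case
  proof (cases rule: eval.cases)
    case ev2: ev_app
    then show ?thesis using ev_app.IH m ev_app.prems by (auto simp: Rep_cval_inject)
  qed
  next
  case (ev_op Ms s n Xs)
  then obtain m' where m: "m = Suc m'" by (cases m) auto
  from ev_op.prems(1)[unfolded m] show ?case
  proof (cases rule: eval.cases)
    case ev2: (ev_op Xs')
    have L: "list_all2 (\<lambda>M X. eval bt eta bind sop M m' X) Ms Xs'" and Yeq: "Y = sop s Xs'"
      using ev2 by auto
    have nm: "n \<le> m'" using m ev_op.prems by simp
    have l1: "length Ms = length Xs" using list_all2_lengthD[OF ev_op.IH] .
    have l2: "length Ms = length Xs'" using list_all2_lengthD[OF L] .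
    have "list_all2 le Xs Xs'"
    proof (rule list_all2_all_nthI)
      show "length Xs = length Xs'" using l1 l2 by simp
    next
      fix i assume i: "i < length Xs"
      have a: "eval bt eta bind sop (Ms ! i) n (Xs ! i) \<and>
         (\<forall>m Y. eval bt eta bind sop (Ms ! i) m Y \<longrightarrow> n \<le> m \<longrightarrow> le (Xs ! i) Y)"
        using list_all2_nthD[OF ev_op.IH, of i] i l1 by simp
      have "eval bt eta bind sop (Ms ! i) m' (Xs' ! i)"
        using list_all2_nthD[OF L, of i] i l1 by simp
      then show "le (Xs ! i) (Xs' ! i)" using a nm by blast
    qed
    moreover have "length Xs = arity s" "length Xs' = arity s"
      using ev_op.hyps(1) l1 l2 by simp_all
    ultimately show ?thesis using C unfolding Yeq
      by (auto simp: cont_sigma_monad_def ocont_on_def)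
  qed
  }
qed

theorem mainTheorem2:
  fixes le :: "'t \<Rightarrow> 't \<Rightarrow> bool" and bt :: 't
    and eta :: "('a::signature) cval \<Rightarrow> 't" and bind :: "'t \<Rightarrow> ('a cval \<Rightarrow> 't) \<Rightarrow> 't"
    and sop :: "'a \<Rightarrow> 't list \<Rightarrow> 't"
    and M :: "'a tm" and n N :: nat and X Y :: 't
  assumes "cont_sigma_monad le bt eta bind sop"
    and "ctm 0 M"
    and "eval bt eta bind sop M n X"
    and "eval bt eta bind sop M (n + N) Y"
  shows "le X Y"
  using eval_mono_aux[OF assms(1) assms(3) assms(4)] by simp

end
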